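(* Let $A,B\in\mathfrak{J}_n$ be nonempty. If $A,B$ satisfy the zero-measure condition, then $xA\,\widetilde\oplus\,(1-x)B$ is Jordan measurable for every $x\in\mathbb{R}$. Otherwise it is Jordan measurable for every $x\in\mathbb{R}$ with $x\ne\frac12$.
   Context: $\mu$ is $n$-dimensional Lebesgue measure; a set $E$ is Jordan measurable iff it is bounded and $\mu(\partial E)=0$. $\operatorname{ci}(A)$ is the closure of the interior of $A$. $\mathfrak{J}_n$ is the family of bounded sets $A\subset\mathbb{R}^n$ with $A=\operatorname{ci}(A)$ and $\mu(\partial A)=0$. For nonempty bounded $A$, $d_S(p,A)=d(p,\partial A)$ if $p\in A$ and $d_S(p,A)=-d(p,\partial A)$ if $p\notin A$, with $d(q,E)=\min_{e\in E}\|q-e\|$. For nonempty $A,B\in\mathfrak{J}_n$, $x\in\mathbb{R}$: $f_{A,B,x}(p)=x\,d_S(p,A)+(1-x)\,d_S(p,B)$, the distance average is $xA\,\widetilde\oplus\,(1-x)B=\{p: f_{A,B,x}(p)\ge0\}$, and $\Omega_{A,B,x}=\{p: f_{A,B,x}(p)=0\}$. The sets $A,B$ satisfy the zero-measure condition if $\mu(\Omega_{A,B,1/2})=0$. *)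

theory Defs
  imports "HOL-Analysis.Analysis"
begin

text \<open>Ambient space R^n is modelled by a Euclidean space type 'a; mu is Lebesgue measure.\<close>

definition jordan_measurable :: "'a::euclidean_space set \<Rightarrow> bool" where
  "jordan_measurable E \<longleftrightarrow> bounded E \<and> emeasure lebesgue (frontier E) = 0"

definition ci :: "'a::euclidean_space set \<Rightarrow> 'a set" where
  "ci A = closure (interior A)"

definition JJ :: "'a::euclidean_space set set" where
  "JJ = {A. bounded A \<and> A = ci A \<and> emeasure lebesgue (frontier A) = 0}"

definition d_S :: "'a::euclidean_space \<Rightarrow> 'a set \<Rightarrow> real" where
  "d_S p A = (if p \<in> A then infdist p (frontier A) else - infdist p (frontier A))"

definition f_ABx :: "'a::euclidean_space set \<Rightarrow> 'a set \<Rightarrow> real \<Rightarrow> 'a \<Rightarrow> real" where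
  "f_ABx A B x p = x * d_S p A + (1 - x) * d_S p B"

definition dist_avg :: "'a::euclidean_space set \<Rightarrow> 'a set \<Rightarrow> real \<Rightarrow> 'a set" where
  "dist_avg A B x = {p. f_ABx A B x p \<ge> 0}"

definition Omega :: "'a::euclidean_space set \<Rightarrow> 'a set \<Rightarrow> real \<Rightarrow> 'a set" where
  "Omega A B x = {p. f_ABx A B x p = 0}"

definition zero_measure_condition :: "'a::euclidean_space set \<Rightarrow> 'a set \<Rightarrow> bool" where
  "zero_measure_condition A B \<longleftrightarrow> emeasure lebesgue (Omega A B (1/2)) = 0"

end

theory Submission
  imports Defs
begin


lemma dS_lip:
  fixes A :: "'a::euclidean_space set"
  shows "\<bar>d_S y A - d_S z A\<bar> \<le> dist y z"
proof -
  have mixed: "infdist y (frontier A) + infdist z (frontier A) \<le> dist y z"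
    if "y \<in> A" "z \<notin> A" for y z
  proof -
    have "closed_segment y z \<inter> frontier A \<noteq> {}"
      by (rule connected_Int_frontier) (use that in auto)
    then obtain w where w: "w \<in> closed_segment y z" "w \<in> frontier A" by blast
    have "dist y z = dist y w + dist w z"
      using w(1) between[of y z w] by (simp add: between_mem_segment)
    moreover have "infdist y (frontier A) \<le> dist y w" "infdist z (frontier A) \<le> dist z w"
      using w(2) infdist_le by auto
    ultimately show ?thesis by (simp add: dist_commute)
  qed
  show ?thesis
  proof (cases "y \<in> A"; cases "z \<in> A")
    assume "y \<in> A" "z \<in> A" then show ?thesis
      using infdist_triangle_abs[of y "frontier A" z] by (simp add: d_S_def)
  next
    assume "y \<in> A" "z \<notin> A" then show ?thesis
      using mixed[of y z] infdist_nonneg[of y "frontier A"] infdist_nonneg[of z "frontier A"]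
      by (simp add: d_S_def)
  next
    assume "y \<notin> A" "z \<in> A" then show ?thesis
      using mixed[of z y] infdist_nonneg[of y "frontier A"] infdist_nonneg[of z "frontier A"]
      by (simp add: d_S_def dist_commute)
  next
    assume "y \<notin> A" "z \<notin> A" then show ?thesis
      using infdist_triangle_abs[of y "frontier A" z] by (simp add: d_S_def)
  qed
qed

lemma dS_cont: "continuous_on UNIV (\<lambda>p. d_S p (A::'a::euclidean_space set))"
  by (rule lipschitz_on_continuous_on[where L=1]) (auto simp: lipschitz_on_def dS_lip dist_real_def)

lemma cone_step:
  fixes p q z :: "'a::euclidean_space"
  assumes q: "dist p q = infdist p G" and V: "q \<in> G"
    and a: "0 \<le> a" "a < b" and beta: "b * \<beta> = (a+b)/2" "0 \<le> \<beta>" "\<beta> < \<psi>'" "\<psi>' \<le> 1"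
    and z: "norm z \<le> infdist p G * (\<psi>' - \<beta>)" "\<psi>' * norm z * infdist p G \<le> z \<bullet> (q - p)"
    and g0: "a * infdist p F = b * infdist p G"
  shows "(b-a)/2 * norm z \<le> a * infdist (p+z) F - b * infdist (p+z) G"
proof -
  define V where "V = infdist p G"
  define d where "d = q - p"
  have nd: "norm d = V" using q by (simp add: V_def d_def dist_norm norm_minus_commute)
  have V0: "0 \<le> V" by (simp add: V_def infdist_nonneg)
  have h1: "infdist (p+z) G \<le> norm (z - d)"
    using infdist_le[OF V, of "p+z"] by (simp add: dist_norm d_def algebra_simps)
  have dd: "d \<bullet> d = V^2" using nd by (metis power2_norm_eq_inner)
  have h2: "norm (z - d)^2 = norm z ^2 - 2*(z \<bullet> d) + V^2"
    using dd by (simp add: power2_norm_eq_inner inner_diff algebra_simps inner_commute)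
  have zd: "\<psi>' * norm z * V \<le> z \<bullet> d" using z(2) by (simp add: V_def d_def)
  have zV: "norm z \<le> V * (\<psi>' - \<beta>)" using z(1) by (simp add: V_def)
  have zV1: "norm z \<le> V" using zV V0 beta
  proof -
    have "V * (\<psi>' - \<beta>) \<le> V * 1" using V0 beta by (intro mult_left_mono) auto
    then show ?thesis using zV by simp
  qed
  have b1: "\<beta> \<le> 1" using beta by linarith
  have s1: "norm z * norm z \<le> V * (\<psi>' - \<beta>) * norm z"
    using mult_right_mono[OF zV norm_ge_zero] .
  have s2: "\<beta>*\<beta> * (norm z * norm z) \<ge> 0" by simp
  have W0: "0 \<le> V * (\<psi>' - \<beta>) * norm z" using V0 beta by simp
  have idW: "\<psi>' * norm z * V - V * \<beta> * norm z = V * (\<psi>' - \<beta>) * norm z"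
    by (simp add: algebra_simps)
  have exp: "(V - \<beta> * norm z)^2 = V^2 - 2 * (V * \<beta> * norm z) + \<beta>*\<beta> * (norm z * norm z)"
    by (simp add: power2_eq_square algebra_simps)
  have "norm (z - d)^2 \<le> (V - \<beta> * norm z)^2"
    unfolding h2 exp using zd s1 s2 W0 idW power2_eq_square[of "norm z"] by linarith
  moreover have "0 \<le> V - \<beta> * norm z"
    using zV1 b1 beta(2) mult_left_le_one_le[OF norm_ge_zero beta(2) b1, of z] by linarith
  ultimately have h3: "norm (z - d) \<le> V - \<beta> * norm z" by (rule power2_le_imp_le)
  have h4: "infdist p F - norm z \<le> infdist (p+z) F"
    using infdist_triangle[of p F "p+z"] by (simp add: dist_norm)
  have "a * (infdist p F - norm z) \<le> a * infdist (p+z) F" using mult_left_mono[OF h4 a(1)] .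
  moreover have "b * infdist (p+z) G \<le> b * (V - \<beta> * norm z)"
    using h1 h3 a by (intro mult_left_mono) auto
  moreover have "b * (\<beta> * norm z) = (a+b)/2 * norm z" using beta(1) by (simp add: mult.assoc[symmetric])
  ultimately show ?thesis using g0 unfolding V_def by (simp add: right_diff_distrib left_diff_distrib field_simps)
qed



lemma piece_negligible:
  fixes g :: "'a::euclidean_space \<Rightarrow> real" and e c :: 'a
  assumes g: "continuous_on UNIV g" and psi: "0 < \<psi>" "\<psi> < norm e" and k: "0 < \<kappa>" and r: "0 < \<rho>"
  shows "negligible {p \<in> cball c \<rho>. g p = 0 \<and> (\<forall>z. norm z \<le> 2*\<rho> \<and> \<psi> * norm z \<le> z \<bullet> e \<longrightarrow> \<kappa> * norm z \<le> g (p+z))}"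
    (is "negligible ?P")
proof -
  have eq: "?P = cball c \<rho> \<inter> {p. g p = 0} \<inter> (\<Inter>z\<in>{z. norm z \<le> 2*\<rho> \<and> \<psi> * norm z \<le> z \<bullet> e}. {p. \<kappa> * norm z \<le> g (p+z)})"
    by auto
  have c1: "closed {p. g p = 0}"
    using closed_Collect_eq[OF g continuous_on_const] by simp
  have c2: "closed {p. \<kappa> * norm z \<le> g (p+z)}" for z
  proof -
    have "continuous_on UNIV (\<lambda>p. g (p + z))"
      by (rule continuous_on_compose2[OF g]) (auto intro!: continuous_intros)
    then show ?thesis using closed_Collect_le[OF continuous_on_const] by simp
  qed
  have closed: "closed ?P" unfolding eq using c1 c2 by (intro closed_Int closed_INT) auto
  define n where "n = norm e"
  have n0: "0 < n" "\<psi> < n" using psi by (auto simp: n_def)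
  define R where "R = \<rho> * (n + \<psi>) / (n * (n - \<psi>)) + \<rho> / n + 1"
  have R1: "\<rho> * (n + \<psi>) \<le> R * n * (n - \<psi>)"
  proof -
    have "\<rho> * (n + \<psi>) = (\<rho> * (n + \<psi>) / (n * (n - \<psi>))) * (n * (n - \<psi>))" using n0 by simp
    also have "\<dots> \<le> R * (n * (n - \<psi>))" using n0 r psi
      by (intro mult_right_mono) (auto simp: R_def)
    finally show ?thesis by (simp add: mult.assoc)
  qed
  have Rp: "0 \<le> \<rho> * (n + \<psi>) / (n * (n - \<psi>))" using n0 r psi by (intro divide_nonneg_nonneg) auto
  have R2: "\<rho> < R * n"
  proof -
    have "\<rho> = (\<rho> / n) * n" using n0 by simp
    also have "\<dots> < R * n"
    proof -
      have "\<rho> / n < R" unfolding R_def using Rp by linarith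
      then show ?thesis using mult_strict_right_mono n0(1) by blast
    qed
    finally show ?thesis .
  qed
  have "0 < \<rho> / n" using n0 r by simp
  then have R0: "0 < R" unfolding R_def using Rp by linarith
  define a0 where "a0 = c - R *\<^sub>R e"
  have key: "\<psi> * norm x \<le> x \<bullet> e" if "a0 + x \<in> cball c \<rho>" for x
  proof -
    define w where "w = a0 + x - c"
    have w: "norm w \<le> \<rho>" using that by (simp add: w_def dist_norm norm_minus_commute)
    have xw: "x = w + R *\<^sub>R e" by (simp add: w_def a0_def)
    have ee: "e \<bullet> e = n * n" by (simp add: n_def power2_eq_square[symmetric] power2_norm_eq_inner)
    have "\<bar>w \<bullet> e\<bar> \<le> \<rho> * n" using Cauchy_Schwarz_ineq2[of w e] w n0
      by (simp add: n_def) (metis mult_right_mono norm_ge_zero order_trans)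
    then have xe: "x \<bullet> e \<ge> R * (n * n) - \<rho> * n" using xw ee by (simp add: inner_add_left)
    have nx: "norm x \<le> \<rho> + R * n" using xw w R0 norm_triangle_ineq[of w "R *\<^sub>R e"]
      by (simp add: n_def)
    have "\<psi> * norm x \<le> \<psi> * (\<rho> + R * n)" using nx psi by (intro mult_left_mono) auto
    also have "\<dots> \<le> R * (n * n) - \<rho> * n" using R1 by (simp add: algebra_simps)
    finally show ?thesis using xe by linarith
  qed
  have far: "a0 \<notin> cball c \<rho>" using R2 R0 by (simp add: a0_def dist_norm n_def)
  show ?thesis
  proof (rule starlike_negligible[OF closed, of a0])
    fix t x
    assume A: "a0 + t *\<^sub>R x \<in> ?P" "0 \<le> t" "a0 + x \<in> ?P"
    show "t = 1"
    proof (rule ccontr)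
      assume t1: "t \<noteq> 1"
      have x0: "x \<noteq> 0" using A(3) far by auto
      have kx: "\<psi> * norm x \<le> x \<bullet> e" using A(3) key by auto
      have dd: "dist (a0 + x) (a0 + t *\<^sub>R x) \<le> 2 * \<rho>"
        using A(1,3) dist_triangle[of "a0+x" "a0 + t *\<^sub>R x" c]
        by (auto simp: dist_commute)
      show False
      proof (cases "t > 1")
        case True
        define z where "z = (t - 1) *\<^sub>R x"
        have eqz: "a0 + t *\<^sub>R x = (a0 + x) + z" by (simp add: z_def algebra_simps)
        have n1: "norm z \<le> 2 * \<rho>" using dd by (simp add: z_def dist_norm algebra_simps norm_minus_commute)
        have n2: "\<psi> * norm z \<le> z \<bullet> e" using kx True
          by (simp add: z_def)
        have "\<kappa> * norm z \<le> g ((a0 + x) + z)" using A(3) n1 n2 by blast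
        then have "\<kappa> * norm z \<le> g (a0 + t *\<^sub>R x)" by (simp only: eqz)
        moreover have "g (a0 + t *\<^sub>R x) = 0" using A(1) by auto
        moreover have "norm z > 0" using True x0 by (simp add: z_def)
        ultimately show False using k by (smt (verit) mult_pos_pos)
      next
        case False
        then have t: "t < 1" using t1 by auto
        define z where "z = (1 - t) *\<^sub>R x"
        have eqz: "a0 + x = (a0 + t *\<^sub>R x) + z" by (simp add: z_def algebra_simps)
        have n1: "norm z \<le> 2 * \<rho>" using dd by (simp add: z_def dist_norm algebra_simps)
        have n2: "\<psi> * norm z \<le> z \<bullet> e" using kx t
          by (simp add: z_def)
        have "\<kappa> * norm z \<le> g ((a0 + t *\<^sub>R x) + z)" using A(1) n1 n2 by blast
        then have "\<kappa> * norm z \<le> g (a0 + x)" by (simp only: eqz)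
        moreover have "g (a0 + x) = 0" using A(3) by auto
        moreover have "norm z > 0" using t x0 by (simp add: z_def)
        ultimately show False using k by (smt (verit) mult_pos_pos)
      qed
    qed
  qed
qed



lemma level_negligible:
  fixes F G :: "'a::euclidean_space set"
  assumes G: "closed G" "G \<noteq> {}" and ab: "0 \<le> a" "a < b"
  shows "negligible {p. a * infdist p F = b * infdist p G \<and> 0 < infdist p G}"
proof -
  define g where "g p = a * infdist p F - b * infdist p G" for p
  have gc: "continuous_on UNIV g" unfolding g_def by (intro continuous_intros)
  define \<beta> where "\<beta> = (a+b)/(2*b)"
  define \<psi>' where "\<psi>' = (1+\<beta>)/2"
  define \<psi> where "\<psi> = (1+\<psi>')/2"
  define \<eta> where "\<eta> = (1-\<psi>')/4"
  have b0: "0 < b" using ab by linarith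
  have fb: "b*\<beta> = (a+b)/2" using b0 by (simp add: \<beta>_def)
  have f0: "0 \<le> \<beta>" using ab b0 by (simp add: \<beta>_def)
  have f1: "\<beta> < 1" using ab b0 by (simp add: \<beta>_def field_simps)
  have f2: "\<beta> < \<psi>'" "\<psi>' \<le> 1" "\<psi>' < 1" using f1 by (auto simp: \<psi>'_def)
  have f3: "0 < \<psi>" "0 < \<eta>" "\<psi> + \<eta> < 1" "\<psi>' \<le> \<psi> - \<eta>" using f0 f2 by (auto simp: \<psi>_def \<eta>_def field_simps)
  obtain D :: "'a set" where D: "countable D" "\<And>X. open X \<Longrightarrow> X \<noteq> {} \<Longrightarrow> \<exists>d\<in>D. d \<in> X"
    by (rule countable_dense_setE) blast
  define \<rho> where "\<rho> m = (\<psi>' - \<beta>) / (2 * (real m + 1))" for m :: nat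
  have \<rho>0: "0 < \<rho> m" for m using f2 by (simp add: \<rho>_def)
  define P where "P e m c = {p \<in> cball c (\<rho> m). g p = 0 \<and>
     (\<forall>z. norm z \<le> 2 * \<rho> m \<and> \<psi> * norm z \<le> z \<bullet> e \<longrightarrow> (b-a)/2 * norm z \<le> g (p+z))}" for e m c
  have neg: "negligible (P e m c)" if "\<psi> < norm e" for e m c
    unfolding P_def by (rule piece_negligible[OF gc f3(1) that]) (use ab \<rho>0 in auto)
  define I where "I = {e\<in>D. \<psi> < norm e} \<times> (UNIV :: nat set) \<times> D"
  have cI: "countable I" unfolding I_def using D(1) by auto
  have cover: "{p. a * infdist p F = b * infdist p G \<and> 0 < infdist p G} \<subseteq> \<Union>((\<lambda>(e,m,c). P e m c) ` I)"
  proof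
    fix p assume "p \<in> {p. a * infdist p F = b * infdist p G \<and> 0 < infdist p G}"
    then have pg: "a * infdist p F = b * infdist p G" and V0: "0 < infdist p G" by auto
    define V where "V = infdist p G"
    obtain q where q: "q \<in> G" "\<And>y. y \<in> G \<Longrightarrow> dist p q \<le> dist p y"
      using distance_attains_inf[OF G] by metis
    have dq: "dist p q = V"
    proof (rule antisym)
      show "V \<le> dist p q" unfolding V_def using q infdist_le by blast
      show "dist p q \<le> V" unfolding V_def infdist_notempty[OF G(2)]
        by (rule cINF_greatest) (use G(2) q in auto)
    qed
    have Vpos: "0 < V" using V0 by (simp add: V_def)
    define ep where "ep = (1/V) *\<^sub>R (q - p)"
    have nep: "norm ep = 1" using dq Vpos by (simp add: ep_def dist_norm norm_minus_commute)
    have qp: "q - p = V *\<^sub>R ep" using Vpos by (simp add: ep_def)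
    obtain m where m: "inverse (real (Suc m)) < V" using reals_Archimedean[OF Vpos] by auto
    obtain e where e: "e \<in> D" "e \<in> ball ep \<eta>" using D(2)[of "ball ep \<eta>"] f3 by auto
    obtain c where c: "c \<in> D" "c \<in> ball p (\<rho> m)" using D(2)[of "ball p (\<rho> m)"] \<rho>0[of m] centre_in_ball[of p "\<rho> m"] by blast
    have ne: "\<psi> < norm e"
    proof -
      have "norm ep \<le> norm e + norm (ep - e)" by (metis norm_triangle_sub)
      then show ?thesis using e(2) nep f3 by (simp add: dist_norm)
    qed
    have "p \<in> P e m c"
      unfolding P_def
    proof (intro CollectI conjI allI impI)
      show "p \<in> cball c (\<rho> m)" using c by (simp add: dist_commute)
      show "g p = 0" using pg by (simp add: g_def)
      fix z assume z: "norm z \<le> 2 * \<rho> m \<and> \<psi> * norm z \<le> z \<bullet> e"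
      have z1: "norm z \<le> infdist p G * (\<psi>' - \<beta>)"
      proof -
        have "2 * \<rho> m = (\<psi>' - \<beta>) * inverse (real (Suc m))" by (simp add: \<rho>_def field_simps)
        also have "\<dots> \<le> (\<psi>' - \<beta>) * V" using m f2 by (intro mult_left_mono) auto
        finally show ?thesis using z by (simp add: V_def mult.commute)
      qed
      have cs: "\<bar>z \<bullet> (e - ep)\<bar> \<le> norm z * \<eta>"
      proof -
        have "\<bar>z \<bullet> (e - ep)\<bar> \<le> norm z * norm (e - ep)" by (rule Cauchy_Schwarz_ineq2)
        also have "\<dots> \<le> norm z * \<eta>" using e(2) by (intro mult_left_mono) (auto simp: dist_norm norm_minus_commute)
        finally show ?thesis .
      qed
      have "\<psi>' * norm z \<le> z \<bullet> ep"
      proof -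
        have "z \<bullet> ep = z \<bullet> e - z \<bullet> (e - ep)" by (simp add: inner_diff_right)
        moreover have "\<psi>' * norm z \<le> (\<psi> - \<eta>) * norm z" using f3 by (intro mult_right_mono) auto
        ultimately show ?thesis using z cs by (simp add: algebra_simps) linarith
      qed
      then have z2: "\<psi>' * norm z * infdist p G \<le> z \<bullet> (q - p)"
        using Vpos unfolding qp V_def[symmetric] by (simp add: mult.commute mult_left_mono)
      have "(b-a)/2 * norm z \<le> a * infdist (p+z) F - b * infdist (p+z) G"
        by (rule cone_step[OF _ q(1) ab fb f0 f2(1) f2(2) z1 z2 pg]) (use dq V_def in auto)
      then show "(b-a)/2 * norm z \<le> g (p+z)" by (simp add: g_def)
    qed
    then show "p \<in> \<Union>((\<lambda>(e,m,c). P e m c) ` I)" using e c ne unfolding I_def by blast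
  qed
  have "negligible (\<Union>((\<lambda>(e,m,c). P e m c) ` I))"
    by (rule negligible_countable_Union) (use cI neg in \<open>auto simp: I_def\<close>)
  then show ?thesis using cover negligible_subset by blast
qed



lemma closed_lebesgue: "closed (S::'a::euclidean_space set) \<Longrightarrow> S \<in> sets lebesgue"
  by (simp add: borel_closed)

lemma JJ_props:
  fixes A :: "'a::euclidean_space set"
  assumes "A \<in> JJ" "A \<noteq> {}"
  shows "closed A" "bounded A" "frontier A \<noteq> {}" "negligible (frontier A)"
proof -
  have A: "bounded A" "A = closure (interior A)" "emeasure lebesgue (frontier A) = 0"
    using assms by (auto simp: JJ_def ci_def)
  show "closed A" using A(2) by (metis closed_closure)
  show "bounded A" by fact
  show "frontier A \<noteq> {}" using A(1) assms(2) frontier_not_empty not_bounded_UNIV by metis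
  show "negligible (frontier A)"
    using A(3) negligible_iff_emeasure0[OF closed_lebesgue[OF frontier_closed[of A]]] by simp
qed

lemma negl_cover:
  assumes "negligible X" "negligible Y" "S \<subseteq> X \<union> Y"
  shows "negligible S"
  using negligible_subset[OF negligible_Un[OF assms(1,2)] assms(3)] .

lemma abs_dS: "\<bar>d_S p A\<bar> = infdist p (frontier A)"
  by (simp add: d_S_def infdist_nonneg)

lemma Omega_sub:
  fixes A B :: "'a::euclidean_space set"
  assumes "p \<in> Omega A B x"
  shows "\<bar>x\<bar> * infdist p (frontier A) = \<bar>1-x\<bar> * infdist p (frontier B)"
proof -
  have "x * d_S p A = - ((1-x) * d_S p B)" using assms by (simp add: Omega_def f_ABx_def)
  then have "\<bar>x * d_S p A\<bar> = \<bar>(1-x) * d_S p B\<bar>" by simp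
  then show ?thesis by (simp add: abs_mult abs_dS)
qed

lemma Omega_negligible:
  fixes A B :: "'a::euclidean_space set"
  assumes "A \<in> JJ" "B \<in> JJ" "A \<noteq> {}" "B \<noteq> {}" "x \<noteq> 1/2"
  shows "negligible (Omega A B x)"
proof -
  have ne: "\<bar>x\<bar> \<noteq> \<bar>1-x\<bar>" using assms(5) by (auto simp: abs_if split: if_splits)
  show ?thesis
  proof (cases "\<bar>x\<bar> < \<bar>1-x\<bar>")
    case True
    have sub: "Omega A B x \<subseteq> frontier B \<union> {p. \<bar>x\<bar> * infdist p (frontier A) = \<bar>1-x\<bar> * infdist p (frontier B) \<and> 0 < infdist p (frontier B)}"
    proof
      fix p assume p: "p \<in> Omega A B x"
      show "p \<in> frontier B \<union> {p. \<bar>x\<bar> * infdist p (frontier A) = \<bar>1-x\<bar> * infdist p (frontier B) \<and> 0 < infdist p (frontier B)}"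
      proof (cases "infdist p (frontier B) = 0")
        case True
        then show ?thesis using in_closed_iff_infdist_zero[OF frontier_closed JJ_props(3)[OF assms(2,4)]] by auto
      next
        case False
        then show ?thesis using Omega_sub[OF p] infdist_nonneg[of p "frontier B"] by auto
      qed
    qed
    have nl: "negligible {p. \<bar>x\<bar> * infdist p (frontier A) = \<bar>1-x\<bar> * infdist p (frontier B) \<and> 0 < infdist p (frontier B)}"
      by (rule level_negligible[OF frontier_closed JJ_props(3)[OF assms(2,4)]]) (use True in auto)
    show ?thesis by (rule negl_cover[OF JJ_props(4)[OF assms(2,4)] nl sub])
  next
    case False
    then have lt: "\<bar>1-x\<bar> < \<bar>x\<bar>" using ne by linarith
    have sub: "Omega A B x \<subseteq> frontier A \<union> {p. \<bar>1-x\<bar> * infdist p (frontier B) = \<bar>x\<bar> * infdist p (frontier A) \<and> 0 < infdist p (frontier A)}"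
    proof
      fix p assume p: "p \<in> Omega A B x"
      show "p \<in> frontier A \<union> {p. \<bar>1-x\<bar> * infdist p (frontier B) = \<bar>x\<bar> * infdist p (frontier A) \<and> 0 < infdist p (frontier A)}"
      proof (cases "infdist p (frontier A) = 0")
        case True
        then show ?thesis using in_closed_iff_infdist_zero[OF frontier_closed JJ_props(3)[OF assms(1,3)]] by auto
      next
        case False
        then show ?thesis using Omega_sub[OF p] infdist_nonneg[of p "frontier A"] by auto
      qed
    qed
    have nl: "negligible {p. \<bar>1-x\<bar> * infdist p (frontier B) = \<bar>x\<bar> * infdist p (frontier A) \<and> 0 < infdist p (frontier A)}"
      by (rule level_negligible[OF frontier_closed JJ_props(3)[OF assms(1,3)]]) (use lt in auto)
    show ?thesis by (rule negl_cover[OF JJ_props(4)[OF assms(1,3)] nl sub])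
  qed
qed



lemma f_cont: "continuous_on UNIV (f_ABx A B x)"
  unfolding f_ABx_def[abs_def] by (rule continuous_on_add[OF continuous_on_mult_left[OF dS_cont] continuous_on_mult_left[OF dS_cont]])

lemma frontier_sub:
  fixes A B :: "'a::euclidean_space set"
  shows "frontier (dist_avg A B x) \<subseteq> Omega A B x"
proof
  fix p assume p: "p \<in> frontier (dist_avg A B x)"
  have cl: "closed (dist_avg A B x)" unfolding dist_avg_def
    using closed_Collect_le[OF continuous_on_const[of UNIV 0] f_cont[of A B x]] by simp
  have "p \<in> dist_avg A B x" using p cl by (metis closure_closed frontier_def Diff_iff)
  then have ge: "0 \<le> f_ABx A B x p" by (simp add: dist_avg_def)
  have op: "open {q. 0 < f_ABx A B x q}"
    using open_Collect_less[OF continuous_on_const[of UNIV 0] f_cont[of A B x]] by simp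
  have "{q. 0 < f_ABx A B x q} \<subseteq> dist_avg A B x" by (auto simp: dist_avg_def)
  then have "{q. 0 < f_ABx A B x q} \<subseteq> interior (dist_avg A B x)" using op interior_maximal by blast
  moreover have "p \<notin> interior (dist_avg A B x)" using p by (simp add: frontier_def)
  ultimately have "\<not> 0 < f_ABx A B x p" by blast
  then show "p \<in> Omega A B x" using ge by (simp add: Omega_def)
qed

lemma infdist_bounds:
  fixes S :: "'a::euclidean_space set"
  assumes "S \<noteq> {}" "S \<subseteq> cball 0 R"
  shows "norm p - R \<le> infdist p S" "infdist p S \<le> norm p + R"
proof -
  obtain s where s: "s \<in> S" using assms by auto
  have "infdist p S \<le> dist p s" by (rule infdist_le[OF s])
  also have "\<dots> \<le> norm p + norm s" by (simp add: dist_norm norm_triangle_ineq4)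
  also have "\<dots> \<le> norm p + R" using s assms by auto
  finally show "infdist p S \<le> norm p + R" .
  show "norm p - R \<le> infdist p S" unfolding infdist_notempty[OF assms(1)]
  proof (rule cINF_greatest[OF assms(1)])
    fix y assume "y \<in> S"
    then have "norm y \<le> R" using assms by auto
    moreover have "norm p - norm y \<le> dist p y" by (simp add: dist_norm norm_triangle_ineq2)
    ultimately show "norm p - R \<le> dist p y" by linarith
  qed
qed

lemma dS_far:
  fixes A :: "'a::euclidean_space set"
  assumes "A \<in> JJ" "A \<noteq> {}" "A \<subseteq> cball 0 R" "R < norm p"
  shows "\<bar>d_S p A + norm p\<bar> \<le> R"
proof -
  have pA: "p \<notin> A" using assms by auto
  have fA: "frontier A \<subseteq> cball 0 R" using assms JJ_props(1)[OF assms(1,2)] frontier_subset_closed by blast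
  show ?thesis using infdist_bounds[OF JJ_props(3)[OF assms(1,2)] fA, of p] pA
    by (simp add: d_S_def)
qed

lemma dist_avg_bounded:
  fixes A B :: "'a::euclidean_space set"
  assumes "A \<in> JJ" "B \<in> JJ" "A \<noteq> {}" "B \<noteq> {}"
  shows "bounded (dist_avg A B x)"
proof -
  obtain RA where RA: "\<forall>y\<in>A. norm y \<le> RA" using JJ_props(2)[OF assms(1,3)] unfolding bounded_iff by blast
  obtain RB where RB: "\<forall>y\<in>B. norm y \<le> RB" using JJ_props(2)[OF assms(2,4)] unfolding bounded_iff by blast
  define R where "R = max 1 (max RA RB)"
  have R3: "RA \<le> R" "RB \<le> R" "0 < R" by (auto simp: R_def)
  have R: "A \<subseteq> cball 0 R" "B \<subseteq> cball 0 R" "0 < R"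
    using RA RB R3 by (auto simp: mem_cball_0 intro: order_trans)
  define M where "M = (\<bar>x\<bar> + \<bar>1-x\<bar> + 1) * R"
  have "dist_avg A B x \<subseteq> cball 0 M"
  proof
    fix p assume p: "p \<in> dist_avg A B x"
    show "p \<in> cball 0 M"
    proof (rule ccontr)
      assume "p \<notin> cball 0 M"
      then have pM: "M < norm p" by simp
      have s1: "1 \<le> \<bar>x\<bar> + \<bar>1-x\<bar>" by linarith
      have "1 * R \<le> (\<bar>x\<bar> + \<bar>1-x\<bar> + 1) * R" using R(3) s1 by (intro mult_right_mono) auto
      then have pR: "R < norm p" using pM by (simp add: M_def)
      have pR2: "(\<bar>x\<bar> + \<bar>1-x\<bar>) * R < norm p" using pM R(3) by (simp add: M_def algebra_simps)
      define eA where "eA = d_S p A + norm p"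
      define eB where "eB = d_S p B + norm p"
      have eA: "\<bar>eA\<bar> \<le> R" unfolding eA_def by (rule dS_far[OF assms(1,3) R(1) pR])
      have eB: "\<bar>eB\<bar> \<le> R" unfolding eB_def by (rule dS_far[OF assms(2,4) R(2) pR])
      have fe: "f_ABx A B x p = x * eA + (1-x) * eB - norm p"
        by (simp add: f_ABx_def eA_def eB_def algebra_simps)
      have "\<bar>x * eA\<bar> \<le> \<bar>x\<bar> * R" using eA by (simp add: abs_mult mult_left_mono)
      moreover have "\<bar>(1-x) * eB\<bar> \<le> \<bar>1-x\<bar> * R" using eB by (simp add: abs_mult mult_left_mono)
      moreover have "(\<bar>x\<bar> + \<bar>1-x\<bar>) * R = \<bar>x\<bar> * R + \<bar>1-x\<bar> * R" by (simp add: algebra_simps)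
      moreover have "x * eA \<le> \<bar>x * eA\<bar>" "(1-x) * eB \<le> \<bar>(1-x) * eB\<bar>" by simp_all
      ultimately have "f_ABx A B x p < 0" using fe pR2 by linarith
      then show False using p by (simp add: dist_avg_def)
    qed
  qed
  then show ?thesis using bounded_cball bounded_subset by blast
qed

theorem mainTheorem6:
  fixes A B :: "'a::euclidean_space set"
  assumes "A \<in> JJ" "B \<in> JJ" "A \<noteq> {}" "B \<noteq> {}"
  shows "(zero_measure_condition A B \<longrightarrow> (\<forall>x::real. jordan_measurable (dist_avg A B x)))
       \<and> (\<not> zero_measure_condition A B \<longrightarrow> (\<forall>x::real. x \<noteq> 1/2 \<longrightarrow> jordan_measurable (dist_avg A B x)))"
proof -
  have jm: "jordan_measurable (dist_avg A B x)" if "negligible (Omega A B x)" for x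
  proof -
    have "negligible (frontier (dist_avg A B x))" using frontier_sub that negligible_subset by blast
    then have "emeasure lebesgue (frontier (dist_avg A B x)) = 0"
      using negligible_iff_emeasure0[OF closed_lebesgue[OF frontier_closed[of "dist_avg A B x"]]] by simp
    then show ?thesis using dist_avg_bounded[OF assms] by (simp add: jordan_measurable_def)
  qed
  have gen: "jordan_measurable (dist_avg A B x)" if "x \<noteq> 1/2" for x
    using jm Omega_negligible[OF assms that] by blast
  have half: "jordan_measurable (dist_avg A B (1/2))" if "zero_measure_condition A B"
  proof -
    have cl: "closed (Omega A B (1/2))" unfolding Omega_def
      using closed_Collect_eq[OF f_cont[of A B "1/2"] continuous_on_const[of UNIV 0]] by simp
    have "negligible (Omega A B (1/2))"
      using that negligible_iff_emeasure0[OF closed_lebesgue[OF cl]] by (simp add: zero_measure_condition_def)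
    then show ?thesis by (rule jm)
  qed
  show ?thesis using gen half by metis
qed

end
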